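(* Let $\alpha\in(0,1)$, let $f:\mathbb{R}\to\mathbb{R}$ be a function and $x_{0}\in\mathbb{R}$. Then the fractional system \[ {}^{c}_{0}D_{t}^{\alpha}x(t)=f(x(t)),\quad t\geq 0,\qquad x(0)=x_{0}, \] has no nonconstant periodic solution $x:[0,\infty)\to\mathbb{R}$.
   Context: For $\alpha\in(0,1)$, the Caputo fractional derivative of order $\alpha$ is $({}^{c}_{0}D_{t}^{\alpha}x)(t)=\frac{1}{\Gamma(1-\alpha)}\int_{0}^{t}(t-\tau)^{-\alpha}x'(\tau)\,d\tau$, i.e. the Riemann–Liouville fractional integral of order $1-\alpha$ applied to $x'$ (where $x'$ is locally integrable). A solution is a function $x$ on $[0,\infty)$ for which this derivative is defined and the equation and initial condition hold; it is periodic if $x(t+T)=x(t)$ for all $t\ge 0$ for some $T>0$. *)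

theory Defs
  imports "HOL-Analysis.Analysis"
begin

text \<open>x is absolutely continuous on [0,oo) with locally integrable derivative dx,
  i.e. x t = x 0 + integral of dx over [0,t] for every t >= 0.\<close>
definition has_loc_int_derivative :: "(real \<Rightarrow> real) \<Rightarrow> (real \<Rightarrow> real) \<Rightarrow> bool" where
  "has_loc_int_derivative x dx \<longleftrightarrow>
     (\<forall>t\<ge>0. set_integrable lborel {0..t} dx \<and>
             x t = x 0 + (LINT \<tau>:{0..t}|lborel. dx \<tau>))"

definition caputo :: "real \<Rightarrow> (real \<Rightarrow> real) \<Rightarrow> real \<Rightarrow> real" where
  "caputo \<alpha> dx t = (1 / Gamma (1 - \<alpha>)) * (LINT \<tau>:{0..t}|lborel. (t - \<tau>) powr (- \<alpha>) * dx \<tau>)"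

definition caputo_defined :: "real \<Rightarrow> (real \<Rightarrow> real) \<Rightarrow> real \<Rightarrow> bool" where
  "caputo_defined \<alpha> dx t \<longleftrightarrow> set_integrable lborel {0..t} (\<lambda>\<tau>. (t - \<tau>) powr (- \<alpha>) * dx \<tau>)"

definition is_solution :: "real \<Rightarrow> (real \<Rightarrow> real) \<Rightarrow> real \<Rightarrow> (real \<Rightarrow> real) \<Rightarrow> bool" where
  "is_solution \<alpha> f x0 x \<longleftrightarrow>
     x 0 = x0 \<and>
     (\<exists>dx. has_loc_int_derivative x dx \<and>
           (\<forall>t\<ge>0. caputo_defined \<alpha> dx t \<and> caputo \<alpha> dx t = f (x t)))"

definition periodic_on_nonneg :: "(real \<Rightarrow> real) \<Rightarrow> bool" where
  "periodic_on_nonneg x \<longleftrightarrow> (\<exists>T>0. \<forall>t\<ge>0. x (t + T) = x t)"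

definition nonconstant_on_nonneg :: "(real \<Rightarrow> real) \<Rightarrow> bool" where
  "nonconstant_on_nonneg x \<longleftrightarrow> (\<exists>s\<ge>0. \<exists>t\<ge>0. x s \<noteq> x t)"

end

theory Submission
  imports Defs
begin

lemma gch_bound:
  fixes \<alpha> :: real assumes "0 < \<alpha>" "\<alpha> < 1"
  shows "\<bar>(\<alpha> - 1) gchoose k\<bar> \<le> 1 \<and> (\<alpha> - 1) gchoose k \<noteq> 0"
proof (induction k)
  case 0 then show ?case by simp
next
  case (Suc k)
  have e: "of_nat (Suc k) * ((\<alpha> - 1) gchoose (Suc k)) = (\<alpha> - 1 - of_nat k) * ((\<alpha> - 1) gchoose k)"
    using gbinomial_mult_1[of "\<alpha> - 1" k] by (simp add: algebra_simps)
  hence e2: "((\<alpha> - 1) gchoose (Suc k)) = (\<alpha> - 1 - of_nat k) / of_nat (Suc k) * ((\<alpha> - 1) gchoose k)"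
    by (simp add: field_simps del: of_nat_Suc)
  have a1: "\<bar>(\<alpha> - 1 - of_nat k) / of_nat (Suc k)\<bar> \<le> 1" using assms by (simp add: field_simps)
  have a2: "(\<alpha> - 1 - of_nat k) / of_nat (Suc k) \<noteq> 0" using assms by simp
  show ?case unfolding e2 abs_mult using Suc a1 a2
    by (metis abs_ge_zero mult_le_one mult_eq_0_iff)
qed

lemma powser_zero_interval:
  fixes c :: "nat \<Rightarrow> real"
  assumes T: "0 < T" and bnd: "\<And>k. \<bar>c k\<bar> \<le> M * T ^ k"
    and z: "\<And>w. 0 < w \<Longrightarrow> w < 1 / T \<Longrightarrow> (\<lambda>k. c k * w ^ k) sums 0"
  shows "c k = 0"
proof -
  have "\<forall>j<n. c j = 0" for n
  proof (induction n)
    case 0 then show ?case by simp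
  next
    case (Suc n)
    define d where "d k = c (k + n)" for k
    have dz: "(\<lambda>k. d k * w ^ k) sums 0" if w: "0 < w" "w < 1 / T" for w
    proof -
      have "(\<lambda>i. c (i + n) * w ^ (i + n)) sums (0 - (\<Sum>i<n. c i * w ^ i))"
        by (rule sums_split_initial_segment[OF z[OF w]])
      also have "(\<Sum>i<n. c i * w ^ i) = 0" using Suc.IH by simp
      finally have "(\<lambda>i. c (i + n) * w ^ (i + n) * (1 / w ^ n)) sums (0 * (1 / w ^ n))"
        by (intro sums_mult2) simp
      moreover have "c (i + n) * w ^ (i + n) * (1 / w ^ n) = d i * w ^ i" for i
        using w by (simp add: d_def power_add)
      ultimately show ?thesis by simp
    qed
    define K where "K = 1 / (2 * T)"
    have K: "0 < K" "K < 1 / T" using T by (auto simp: K_def field_simps)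
    have sK: "summable (\<lambda>k. d k * K ^ k)"
    proof (rule summable_comparison_test')
      show "summable (\<lambda>k. (M * T ^ n) * (1/2) ^ k)"
        by (intro summable_mult complete_algebra_summable_geometric) simp
      show "norm (d k * K ^ k) \<le> (M * T ^ n) * (1/2) ^ k" for k
      proof -
        have "norm (d k * K ^ k) = \<bar>c (k + n)\<bar> * K ^ k" using K by (simp add: d_def abs_mult)
        also have "\<dots> \<le> (M * T ^ (k + n)) * K ^ k"
          using K bnd by (intro mult_right_mono) auto
        also have "\<dots> = (M * T ^ n) * (T * K) ^ k" by (simp add: power_add power_mult_distrib)
        also have "T * K = 1/2" using T by (simp add: K_def)
        finally show ?thesis by simp
      qed
    qed
    define S where "S w = (\<Sum>k. d k * w ^ k)" for w
    have "isCont S 0" unfolding S_def using K by (intro isCont_powser[OF sK]) auto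
    hence l1: "(S \<longlongrightarrow> S 0) (at_right 0)"
      by (simp add: isCont_def filterlim_at_split)
    have "eventually (\<lambda>w. S w = 0) (at_right 0)"
      unfolding eventually_at_right_field
      using T dz by (intro exI[of _ "1/T"]) (auto simp: S_def sums_iff)
    hence l2: "(S \<longlongrightarrow> 0) (at_right 0)" by (rule tendsto_eventually)
    have "S 0 = 0" using tendsto_unique[OF _ l1 l2] by simp
    hence "c n = 0" by (simp add: S_def d_def)
    with Suc.IH show ?case using less_Suc_eq by auto
  qed
  thus ?thesis by blast
qed

lemma set_int_mult_bounded:
  fixes G \<phi> :: "real \<Rightarrow> real"
  assumes G: "set_integrable lborel A G" and m: "set_borel_measurable lborel A \<phi>"
    and b: "\<And>u. u \<in> A \<Longrightarrow> \<bar>\<phi> u\<bar> \<le> B"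
  shows "set_integrable lborel A (\<lambda>u. \<phi> u * G u)"
proof (rule set_integrable_bound[where f = "\<lambda>u. B * G u"])
  show "set_integrable lborel A (\<lambda>u. B * G u)" using G by simp
  have mG: "(\<lambda>x. indicator A x *\<^sub>R G x) \<in> borel_measurable lborel"
    using G unfolding set_integrable_def by (rule borel_measurable_integrable)
  have "(\<lambda>x. indicator A x *\<^sub>R (\<phi> x * G x)) = (\<lambda>x. (indicator A x *\<^sub>R \<phi> x) * (indicator A x *\<^sub>R G x))"
    by (auto simp: indicator_def)
  also have "\<dots> \<in> borel_measurable lborel"
    using m mG unfolding set_borel_measurable_def by measurable
  finally show "set_borel_measurable lborel A (\<lambda>u. \<phi> u * G u)"
    unfolding set_borel_measurable_def .
  show "AE x in lborel. x \<in> A \<longrightarrow> norm (\<phi> x * G x) \<le> norm (B * G x)"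
  proof (intro AE_I2 impI)
    fix x assume "x \<in> A"
    hence "\<bar>\<phi> x\<bar> \<le> B" by (rule b)
    thus "norm (\<phi> x * G x) \<le> norm (B * G x)"
      by (simp add: abs_mult mult_right_mono)
  qed
qed

lemma sbm_global: "A \<in> sets borel \<Longrightarrow> (f::real\<Rightarrow>real) \<in> borel_measurable borel \<Longrightarrow> set_borel_measurable lborel A f"
  unfolding set_borel_measurable_def
  by (auto intro!: borel_measurable_scaleR borel_measurable_indicator)

lemma moments_zero:
  fixes G :: "real \<Rightarrow> real"
  assumes \<alpha>: "0 < \<alpha>" "\<alpha> < 1" and T: "0 < T" and Gi: "set_integrable lborel {0..T} G"
    and Z: "\<And>v. v > T \<Longrightarrow> (LINT u:{0..T}|lborel. (v - u) powr (\<alpha> - 1) * G u) = 0"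
  shows "(LINT u:{0..T}|lborel. u ^ k * G u) = 0"
proof -
  define m where "m k = (LINT u:{0..T}|lborel. u ^ k * G u)" for k
  define MG where "MG = (LINT u:{0..T}|lborel. \<bar>G u\<bar>)"
  have mi: "set_integrable lborel {0..T} (\<lambda>u. u ^ k * G u)" for k
    by (rule set_int_mult_bounded[OF Gi, where B="T^k"])
       (auto intro!: sbm_global power_mono)
  have mb: "\<bar>m k\<bar> \<le> MG * T ^ k" for k
  proof -
    have "\<bar>m k\<bar> \<le> (LINT u:{0..T}|lborel. norm (u ^ k * G u))"
      unfolding m_def using set_integral_norm_bound[OF mi[of k]] by simp
    also have "\<dots> \<le> (LINT u:{0..T}|lborel. T ^ k * \<bar>G u\<bar>)"
    proof (rule set_integral_mono)
      show "set_integrable lborel {0..T} (\<lambda>u. norm (u ^ k * G u))"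
        using set_integrable_abs[OF mi[of k]] by simp
      show "set_integrable lborel {0..T} (\<lambda>u. T ^ k * \<bar>G u\<bar>)"
        using set_integrable_abs[OF Gi] by simp
      show "norm (u ^ k * G u) \<le> T ^ k * \<bar>G u\<bar>" if "u \<in> {0..T}" for u
        using that by (auto simp: abs_mult intro!: mult_right_mono power_mono)
    qed
    finally show ?thesis by (simp add: MG_def mult.commute)
  qed
  define c where "c k = ((\<alpha> - 1) gchoose k) * (-1) ^ k * m k" for k
  have cb: "\<bar>c k\<bar> \<le> MG * T ^ k" for k
  proof -
    have "\<bar>c k\<bar> = \<bar>(\<alpha> - 1) gchoose k\<bar> * \<bar>m k\<bar>" by (simp add: c_def abs_mult)
    also have "\<dots> \<le> 1 * \<bar>m k\<bar>" using gch_bound[OF \<alpha>, of k] by (intro mult_right_mono) auto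
    finally show ?thesis using mb[of k] by simp
  qed
  have cz: "(\<lambda>k. c k * w ^ k) sums 0" if w: "0 < w" "w < 1 / T" for w
  proof -
    define v where "v = 1 / w"
    have v: "v > T" using w T by (simp add: v_def field_simps)
    have wT: "w * T < 1" using w T by (simp add: field_simps)
    have eq1: "(v - u) powr (\<alpha> - 1) * G u = v powr (\<alpha> - 1) * ((1 + - (w * u)) powr (\<alpha> - 1) * G u)"
      if "u \<in> {0..T}" for u
    proof -
      have "v - u = v * (1 + - (w * u))" using w by (simp add: v_def field_simps)
      moreover have "w * u \<le> w * T" using that w by (intro mult_left_mono) auto
      hence "1 + - (w * u) \<ge> 0" using wT by linarith
      ultimately show ?thesis using v T by (simp add: powr_mult)
    qed
    have "0 = (LINT u:{0..T}|lborel. (v - u) powr (\<alpha> - 1) * G u)" using Z[OF v] by simp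
    also have "\<dots> = (LINT u:{0..T}|lborel. v powr (\<alpha> - 1) * ((1 + - (w * u)) powr (\<alpha> - 1) * G u))"
      by (intro set_lebesgue_integral_cong) (use eq1 in auto)
    also have "\<dots> = v powr (\<alpha> - 1) * (LINT u:{0..T}|lborel. (1 + - (w * u)) powr (\<alpha> - 1) * G u)"
      by simp
    finally have I0: "(LINT u:{0..T}|lborel. (1 + - (w * u)) powr (\<alpha> - 1) * G u) = 0"
      using v T by simp
    define f where "f k u = indicator {0..T} u * (((\<alpha> - 1) gchoose k) * (- (w * u)) ^ k * G u)" for k u
    have pw: "(- (w * u)) ^ k = (-w) ^ k * u ^ k" for u k
      by (simp add: power_mult_distrib[symmetric])
    have feq: "f k = (\<lambda>u. indicator {0..T} u *\<^sub>R ((((\<alpha> - 1) gchoose k) * (-w) ^ k) * (u ^ k * G u)))" for k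
      by (simp add: f_def fun_eq_iff pw)
    have fi: "integrable lborel (f k)" for k
    proof -
      have "set_integrable lborel {0..T} (\<lambda>u. (((\<alpha> - 1) gchoose k) * (-w) ^ k) * (u ^ k * G u))"
        using mi by simp
      thus ?thesis unfolding set_integrable_def feq .
    qed
    have fI: "integral\<^sup>L lborel (f k) = c k * w ^ k" for k
    proof -
      have "integral\<^sup>L lborel (f k) = (LINT u:{0..T}|lborel. (((\<alpha> - 1) gchoose k) * (-w) ^ k) * (u ^ k * G u))"
        unfolding set_lebesgue_integral_def feq ..
      also have "\<dots> = (((\<alpha> - 1) gchoose k) * (-w) ^ k) * m k"
        unfolding m_def by (rule set_integral_mult_right)
      also have "\<dots> = c k * w ^ k" by (simp add: c_def power_minus' mult_ac)
      finally show ?thesis .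
    qed
    have fn: "norm (f k u) \<le> indicator {0..T} u * (\<bar>G u\<bar> * (w * T) ^ k)" for k u
    proof (cases "u \<in> {0..T}")
      case True
      have "norm (f k u) = \<bar>(\<alpha> - 1) gchoose k\<bar> * (w * u) ^ k * \<bar>G u\<bar>"
        using True w by (simp add: f_def abs_mult power_abs)
      also have "\<dots> \<le> 1 * (w * T) ^ k * \<bar>G u\<bar>"
        using True w gch_bound[OF \<alpha>, of k]
        by (intro mult_mono power_mono) auto
      finally show ?thesis using True by (simp add: mult_ac)
    qed (simp add: f_def)
    have geo: "summable (\<lambda>k. (w * T) ^ k)" using w T wT by (intro summable_geometric) simp
    have gs: "summable (\<lambda>k. indicator {0..T} u * (\<bar>G u\<bar> * (w * T) ^ k))" for u
        using geo by (intro summable_mult summable_mult) 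
    have sum1: "AE u in lborel. summable (\<lambda>k. norm (f k u))"
      by (intro AE_I2 summable_comparison_test'[OF gs]) (use fn in simp)
    have sum2: "summable (\<lambda>k. \<integral>u. norm (f k u) \<partial>lborel)"
    proof (rule summable_comparison_test')
      show "summable (\<lambda>k. MG * (w * T) ^ k)" using geo by (intro summable_mult)
      show "norm (\<integral>u. norm (f k u) \<partial>lborel) \<le> MG * (w * T) ^ k" for k
      proof -
        have "norm (\<integral>u. norm (f k u) \<partial>lborel) = (\<integral>u. norm (f k u) \<partial>lborel)"
          by (simp add: integral_nonneg_AE)
        also have "\<dots> \<le> (\<integral>u. indicator {0..T} u * (\<bar>G u\<bar> * (w * T) ^ k) \<partial>lborel)"
        proof (rule integral_mono)
          have "set_integrable lborel {0..T} (\<lambda>u. \<bar>G u\<bar> * (w * T) ^ k)"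
            using set_integrable_abs[OF Gi] by simp
          thus "integrable lborel (\<lambda>u. indicator {0..T} u * (\<bar>G u\<bar> * (w * T) ^ k))"
            unfolding set_integrable_def by simp
          show "integrable lborel (\<lambda>u. norm (f k u))" using fi by simp
        qed (use fn in simp)
        also have "\<dots> = (\<integral>u. (w * T) ^ k * (indicator {0..T} u * \<bar>G u\<bar>) \<partial>lborel)"
          by (simp add: mult_ac)
        also have "\<dots> = MG * (w * T) ^ k"
          unfolding MG_def set_lebesgue_integral_def integral_mult_right_zero by simp
        finally show ?thesis .
      qed
    qed
    have "(\<lambda>k. integral\<^sup>L lborel (f k)) sums (\<integral>u. (\<Sum>k. f k u) \<partial>lborel)"
      by (rule sums_integral[OF fi sum1 sum2])
    also have "(\<integral>u. (\<Sum>k. f k u) \<partial>lborel) = (LINT u:{0..T}|lborel. (1 + - (w * u)) powr (\<alpha> - 1) * G u)"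
      unfolding set_lebesgue_integral_def
    proof (intro Bochner_Integration.integral_cong refl)
      fix u
      show "(\<Sum>k. f k u) = indicator {0..T} u *\<^sub>R ((1 + - (w * u)) powr (\<alpha> - 1) * G u)"
      proof (cases "u \<in> {0..T}")
        case True
        have "w * u \<le> w * T" "0 \<le> w * u" using True w by (auto intro!: mult_left_mono)
        hence "\<bar>- (w * u)\<bar> < 1" using wT by linarith
        from gen_binomial_real[OF this, of "\<alpha> - 1"]
        have "(\<lambda>k. ((\<alpha> - 1) gchoose k) * (- (w * u)) ^ k * G u) sums ((1 + - (w * u)) powr (\<alpha> - 1) * G u)"
          by (rule sums_mult2)
        thus ?thesis using True by (simp add: f_def sums_iff)
      qed (simp add: f_def)
    qed
    also note I0
    finally show ?thesis by (simp add: fI)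
  qed
  have "c k = 0" by (rule powser_zero_interval[OF T cb cz])
  thus ?thesis using gch_bound[OF \<alpha>, of k] by (simp add: c_def m_def)
qed

lemma cont_orth:
  fixes G \<phi> :: "real \<Rightarrow> real"
  assumes Gi: "set_integrable lborel {0..T} G"
    and mz: "\<And>k. (LINT u:{0..T}|lborel. u ^ k * G u) = 0"
    and \<phi>c: "continuous_on {0..T} \<phi>"
  shows "(LINT u:{0..T}|lborel. \<phi> u * G u) = 0"
proof -
  have cm: "set_borel_measurable lborel {0..T} g" if "continuous_on {0..T} g" for g :: "real \<Rightarrow> real"
    unfolding set_borel_measurable_def
    using borel_measurable_continuous_on_indicator[OF _ that] by simp
  have ci: "set_integrable lborel {0..T} (\<lambda>u. g u * G u)" if "continuous_on {0..T} g" for g :: "real \<Rightarrow> real"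
  proof -
    have "compact (g ` {0..T})" by (rule compact_continuous_image[OF that]) simp
    then obtain B where "\<forall>y\<in>g ` {0..T}. norm y \<le> B" using compact_imp_bounded bounded_iff by metis
    hence "\<And>u. u \<in> {0..T} \<Longrightarrow> \<bar>g u\<bar> \<le> B" by auto
    thus ?thesis by (rule set_int_mult_bounded[OF Gi cm[OF that]])
  qed
  define I where "I = (LINT u:{0..T}|lborel. \<phi> u * G u)"
  define MG where "MG = (LINT u:{0..T}|lborel. \<bar>G u\<bar>)"
  have MG0: "MG \<ge> 0" unfolding MG_def set_lebesgue_integral_def
    by (intro integral_nonneg_AE) auto
  have bnd: "\<bar>I\<bar> \<le> e * MG" if e: "e > 0" for e
  proof -
    obtain p where pp: "polynomial_function p" and pa: "\<forall>x\<in>{0..T}. norm (\<phi> x - p x) < e"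
      using Stone_Weierstrass_polynomial_function[OF _ \<phi>c e] by auto
    have "real_polynomial_function p" using pp real_polynomial_function_eq by auto
    then obtain a n where p: "p = (\<lambda>x. \<Sum>i\<le>n. a i * x ^ i)"
      using real_polynomial_function_iff_sum by auto
    have pc: "continuous_on {0..T} p" unfolding p by (intro continuous_intros)
    have "(LINT u:{0..T}|lborel. p u * G u) = (\<integral>u. (\<Sum>i\<le>n. a i * (indicator {0..T} u * (u ^ i * G u))) \<partial>lborel)"
      unfolding set_lebesgue_integral_def p
      by (intro Bochner_Integration.integral_cong) (auto simp: sum_distrib_right sum_distrib_left mult_ac)
    also have "\<dots> = (\<Sum>i\<le>n. a i * (LINT u:{0..T}|lborel. u ^ i * G u))"
    proof -
      have "integrable lborel (\<lambda>u. a i * (indicator {0..T} u * (u ^ i * G u)))" for i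
      proof -
        have "set_integrable lborel {0..T} (\<lambda>u. u ^ i * G u)" by (rule ci) (intro continuous_intros)
        thus ?thesis unfolding set_integrable_def by simp
      qed
      hence "(\<integral>u. (\<Sum>i\<le>n. a i * (indicator {0..T} u * (u ^ i * G u))) \<partial>lborel)
          = (\<Sum>i\<le>n. (\<integral>u. a i * (indicator {0..T} u * (u ^ i * G u)) \<partial>lborel))"
        by simp
      thus ?thesis by (simp add: set_lebesgue_integral_def)
    qed
    also have "\<dots> = 0" by (simp add: mz)
    finally have p0: "(LINT u:{0..T}|lborel. p u * G u) = 0" .
    have dI: "set_integrable lborel {0..T} (\<lambda>u. (\<phi> u - p u) * G u)"
      by (rule ci) (intro continuous_on_diff \<phi>c pc)
    have "I = (LINT u:{0..T}|lborel. \<phi> u * G u - p u * G u)"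
      using set_integral_diff(2)[OF ci[OF \<phi>c] ci[OF pc]] p0 by (simp add: I_def)
    also have "\<dots> = (LINT u:{0..T}|lborel. (\<phi> u - p u) * G u)" by (simp add: algebra_simps)
    finally have "\<bar>I\<bar> \<le> (LINT u:{0..T}|lborel. norm ((\<phi> u - p u) * G u))"
      using set_integral_norm_bound[OF dI] by simp
    also have "\<dots> \<le> (LINT u:{0..T}|lborel. e * \<bar>G u\<bar>)"
    proof (rule set_integral_mono)
      show "set_integrable lborel {0..T} (\<lambda>u. norm ((\<phi> u - p u) * G u))"
        using set_integrable_abs[OF dI] by simp
      show "set_integrable lborel {0..T} (\<lambda>u. e * \<bar>G u\<bar>)"
        using set_integrable_abs[OF Gi] by simp
      show "norm ((\<phi> u - p u) * G u) \<le> e * \<bar>G u\<bar>" if "u \<in> {0..T}" for u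
      proof -
        have "\<bar>\<phi> u - p u\<bar> \<le> e" using pa that by (simp add: less_imp_le)
        thus ?thesis by (simp add: abs_mult mult_right_mono)
      qed
    qed
    also have "\<dots> = e * MG" by (simp add: MG_def)
    finally show ?thesis .
  qed
  show ?thesis
  proof (rule ccontr)
    assume "(LINT u:{0..T}|lborel. \<phi> u * G u) \<noteq> 0"
    hence I0: "\<bar>I\<bar> > 0" by (simp add: I_def)
    have "\<bar>I\<bar> \<le> (\<bar>I\<bar> / (MG + 1)) * MG" using bnd[of "\<bar>I\<bar> / (MG + 1)"] I0 MG0 by simp
    also have "\<dots> < \<bar>I\<bar>" using I0 MG0 by (simp add: field_simps)
    finally show False by simp
  qed
qed

lemma final_zero:
  fixes G :: "real \<Rightarrow> real"
  assumes \<alpha>: "0 < \<alpha>" "\<alpha> < 1" and t: "0 \<le> t" "t \<le> T"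
    and orth: "\<And>\<phi>. continuous_on {0..T} \<phi> \<Longrightarrow> (LINT u:{0..T}|lborel. \<phi> u * G u) = 0"
    and Gi: "set_integrable lborel {0..T} G"
    and Ht: "set_integrable lborel {0..t} (\<lambda>u. (t - u) powr (\<alpha> - 1) * G u)"
  shows "(LINT u:{0..t}|lborel. (t - u) powr (\<alpha> - 1) * G u) = 0"
proof -
  define \<psi> where "\<psi> n u = (max (t - u) (1 / Suc n)) powr (\<alpha> - 1) * min 1 (max 0 (Suc n * (t - u) - 1))"
    for n :: nat and u :: real
  have \<psi>c: "continuous_on A (\<psi> n)" for n A
    unfolding \<psi>_def by (intro continuous_intros) (auto simp: max_def)
  define s where "s n u = indicator {0..T} u * (\<psi> n u * G u)" for n u
  define f where "f u = indicator {0..t} u * ((t - u) powr (\<alpha> - 1) * G u)" for u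
  define w where "w u = \<bar>f u\<bar>" for u
  have mG: "(\<lambda>u. indicator {0..T} u * G u) \<in> borel_measurable lborel"
    using Gi unfolding set_integrable_def by (auto dest: borel_measurable_integrable)
  have fi: "integrable lborel f" using Ht unfolding set_integrable_def f_def by simp
  have \<psi>b: "\<bar>\<psi> n u\<bar> \<le> (if u < t then (t - u) powr (\<alpha> - 1) else 0)" for n u
  proof (cases "u < t")
    case True
    have c01: "0 \<le> min 1 (max 0 (Suc n * (t - u) - 1))" "min 1 (max 0 (Suc n * (t - u) - 1)) \<le> 1" by auto
    show ?thesis
    proof (cases "t - u \<ge> 1 / Suc n")
      case True
      hence "\<psi> n u = (t - u) powr (\<alpha> - 1) * min 1 (max 0 (Suc n * (t - u) - 1))"
        by (simp add: \<psi>_def max_def)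
      moreover have "(t - u) powr (\<alpha> - 1) \<ge> 0" by simp
      ultimately show ?thesis using \<open>u < t\<close> c01
        by (simp add: abs_mult mult_left_le)
    next
      case False
      hence "Suc n * (t - u) < 1" by (simp add: field_simps)
      hence "min 1 (max 0 (Suc n * (t - u) - 1)) = 0" by simp
      thus ?thesis by (simp add: \<psi>_def)
    qed
  next
    case False
    hence "Suc n * (t - u) \<le> 0" by (simp add: mult_nonneg_nonpos)
    hence "min 1 (max 0 (Suc n * (t - u) - 1)) = 0" by simp
    thus ?thesis using False by (simp add: \<psi>_def)
  qed
  have lim: "(\<lambda>n. s n u) \<longlonglongrightarrow> f u" for u
  proof (cases "u \<in> {0..T} \<and> u < t")
    case True
    obtain N :: nat where N: "2 / (t - u) < N" using reals_Archimedean2 by blast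
    have "s n u = f u" if "n \<ge> N" for n
    proof -
      have tu: "t - u > 0" using True by simp
      have "2 / (t - u) < Suc n" using N that by linarith
      hence "2 < Suc n * (t - u)" using tu by (simp add: field_simps)
      hence "min 1 (max 0 (Suc n * (t - u) - 1)) = 1" by simp
      moreover have "1 / Suc n \<le> t - u" using \<open>2 < Suc n * (t - u)\<close> by (simp add: field_simps)
      ultimately have "\<psi> n u = (t - u) powr (\<alpha> - 1)" by (simp add: \<psi>_def max_def)
      thus ?thesis using True by (simp add: s_def f_def)
    qed
    thus ?thesis by (intro tendsto_eventually) (auto simp: eventually_sequentially)
  next
    case False
    have "s n u = 0" for n
      using \<psi>b[of n u] False by (auto simp: s_def split: if_splits)
    moreover have "f u = 0" using False t by (cases "u = t") (auto simp: f_def)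
    ultimately show ?thesis by simp
  qed
  have sm: "s n \<in> borel_measurable lborel" for n
  proof -
    have "\<psi> n \<in> borel_measurable borel" using \<psi>c[of UNIV n] by (rule borel_measurable_continuous_onI)
    hence "(\<lambda>u. \<psi> n u * (indicator {0..T} u * G u)) \<in> borel_measurable lborel" using mG by measurable
    moreover have "s n = (\<lambda>u. \<psi> n u * (indicator {0..T} u * G u))" by (simp add: s_def fun_eq_iff)
    ultimately show ?thesis by simp
  qed
  have sb: "norm (s n u) \<le> w u" for n u
  proof (cases "u \<in> {0..T}")
    case True
    show ?thesis
    proof (cases "u < t")
      case True
      hence "\<bar>\<psi> n u\<bar> \<le> (t - u) powr (\<alpha> - 1)" using \<psi>b[of n u] by simp
      thus ?thesis using True \<open>u \<in> {0..T}\<close>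
        by (simp add: s_def w_def f_def abs_mult mult_right_mono)
    next
      case False
      thus ?thesis using \<psi>b[of n u] by (simp add: s_def w_def)
    qed
  qed (simp add: s_def w_def)
  have "(\<lambda>n. integral\<^sup>L lborel (s n)) \<longlonglongrightarrow> integral\<^sup>L lborel f"
  proof (rule integral_dominated_convergence[where w = w])
    show "integrable lborel w" unfolding w_def[abs_def] using fi by (rule integrable_abs)
    show "f \<in> borel_measurable lborel" using fi by (rule borel_measurable_integrable)
  qed (use sm sb lim in auto)
  moreover have "integral\<^sup>L lborel (s n) = 0" for n
  proof -
    have "integral\<^sup>L lborel (s n) = (LINT u:{0..T}|lborel. \<psi> n u * G u)"
      unfolding set_lebesgue_integral_def s_def by simp
    also have "\<dots> = 0" by (rule orth[OF \<psi>c])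
    finally show ?thesis .
  qed
  ultimately have "(\<lambda>n. 0) \<longlonglongrightarrow> integral\<^sup>L lborel f" by simp
  hence "integral\<^sup>L lborel f = 0" using LIMSEQ_unique[OF tendsto_const] by metis
  thus ?thesis unfolding f_def[abs_def] set_lebesgue_integral_def by simp
qed

lemma beta_nn:
  assumes \<alpha>: "0 < \<alpha>" "\<alpha> < 1"
  shows "(\<integral>\<^sup>+w. ennreal (indicator {0..1} w * (w powr (- \<alpha>) * (1 - w) powr (\<alpha> - 1))) \<partial>lborel)
     = ennreal (Beta (1 - \<alpha>) \<alpha>)"
proof -
  have "((\<lambda>w. w powr ((1 - \<alpha>) - 1) * (1 - w) powr (\<alpha> - 1)) has_integral Beta (1 - \<alpha>) \<alpha>) {0..1}"
    using \<alpha> by (intro has_integral_Beta_real) auto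
  hence "((\<lambda>w. w powr (- \<alpha>) * (1 - w) powr (\<alpha> - 1)) has_integral Beta (1 - \<alpha>) \<alpha>) {0..1}" by simp
  from nn_integral_has_integral_lebesgue[OF _ this] show ?thesis by simp
qed

lemma beta_kernel:
  assumes \<alpha>: "0 < \<alpha>" "\<alpha> < 1" and st: "s < t"
  shows "(\<integral>\<^sup>+u. ennreal (indicator {s..t} u * ((t - u) powr (\<alpha> - 1) * (u - s) powr (- \<alpha>))) \<partial>lborel)
     = ennreal (Beta (1 - \<alpha>) \<alpha>)"
proof -
  define c where "c = t - s"
  have c: "c > 0" using st by (simp add: c_def)
  define F where "F u = ennreal (indicator {s..t} u * ((t - u) powr (\<alpha> - 1) * (u - s) powr (- \<alpha>)))" for u
  have Fm: "F \<in> borel_measurable borel" unfolding F_def by measurable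
  have Fe: "F (s + c * w) = ennreal (1 / c) * ennreal (indicator {0..1} w * (w powr (- \<alpha>) * (1 - w) powr (\<alpha> - 1)))" for w
  proof (cases "w \<in> {0..1}")
    case True
    have "0 \<le> c * w" "c * w \<le> c" using True c by (auto intro: mult_left_le)
    hence i: "s + c * w \<in> {s..t}" by (simp add: c_def)
    have e1: "t - (s + c * w) = c * (1 - w)" by (simp add: c_def algebra_simps)
    have e2: "s + c * w - s = c * w" by simp
    have "(c * (1 - w)) powr (\<alpha> - 1) * (c * w) powr (- \<alpha>)
        = (c powr (\<alpha> - 1) * c powr (- \<alpha>)) * (w powr (- \<alpha>) * (1 - w) powr (\<alpha> - 1))"
      using True c by (simp add: powr_mult mult_ac)
    also have "c powr (\<alpha> - 1) * c powr (- \<alpha>) = 1 / c"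
    proof -
      have "c powr (\<alpha> - 1) * c powr (- \<alpha>) = c powr ((\<alpha> - 1) + (- \<alpha>))" by (rule powr_add[symmetric])
      also have "\<dots> = c powr (- 1)" by simp
      also have "\<dots> = 1 / c" using c by (simp add: powr_minus_divide)
      finally show ?thesis .
    qed
    finally have "F (s + c * w) = ennreal (1 / c * (indicator {0..1} w * (w powr (- \<alpha>) * (1 - w) powr (\<alpha> - 1))))"
      unfolding F_def e1 e2 using i True by simp
    also have "\<dots> = ennreal (1 / c) * ennreal (indicator {0..1} w * (w powr (- \<alpha>) * (1 - w) powr (\<alpha> - 1)))"
      by (rule ennreal_mult) (use c in auto)
    finally show ?thesis .
  next
    case False
    have "w < 0 \<or> w > 1" using False by auto
    hence "c * w < 0 \<or> c * w > c * 1" using c by (auto intro: mult_strict_left_mono mult_pos_neg)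
    hence "s + c * w \<notin> {s..t}" by (auto simp: c_def)
    thus ?thesis using False by (simp add: F_def)
  qed
  have "integral\<^sup>N lborel F = ennreal \<bar>c\<bar> * (\<integral>\<^sup>+w. F (s + c * w) \<partial>lborel)"
    using nn_integral_real_affine[OF Fm, of c s] c by simp
  also have "\<dots> = ennreal c * (ennreal (1 / c) * ennreal (Beta (1 - \<alpha>) \<alpha>))"
    unfolding Fe using c by (simp add: nn_integral_cmult beta_nn[OF \<alpha>])
  also have "\<dots> = ennreal (Beta (1 - \<alpha>) \<alpha>)"
    using c by (simp add: mult.assoc[symmetric] ennreal_mult[symmetric])
  finally show ?thesis unfolding F_def .
qed

lemma fubini_key:
  fixes g :: "real \<Rightarrow> real"
  assumes \<alpha>: "0 < \<alpha>" "\<alpha> < 1" and t: "0 \<le> t" and gi: "set_integrable lborel {0..t} g"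
  shows "set_integrable lborel {0..t} (\<lambda>u. (t - u) powr (\<alpha> - 1) * (LINT s:{0..u}|lborel. (u - s) powr (- \<alpha>) * g s))"
    and "(LINT u:{0..t}|lborel. (t - u) powr (\<alpha> - 1) * (LINT s:{0..u}|lborel. (u - s) powr (- \<alpha>) * g s))
          = Beta (1 - \<alpha>) \<alpha> * (LINT s:{0..t}|lborel. g s)"
proof -
  define g' where "g' s = indicator {0..t} s * g s" for s
  have g'i: "integrable lborel g'" using gi unfolding set_integrable_def g'_def[abs_def] by simp
  have g'm[measurable]: "g' \<in> borel_measurable borel"
    using borel_measurable_integrable[OF g'i] by simp
  define B where "B = Beta (1 - \<alpha>) \<alpha>"
  have B0: "B > 0" using \<alpha> by (simp add: B_def Beta_def)
  define k where "k u s = (if s \<le> u \<and> u \<le> t then (t - u) powr (\<alpha> - 1) * (u - s) powr (- \<alpha>) else 0)" for u s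
  have k0: "k u s \<ge> 0" for u s by (simp add: k_def)
  have km[measurable]: "(\<lambda>(u, s). k u s) \<in> borel_measurable (lborel \<Otimes>\<^sub>M lborel)"
    unfolding k_def[abs_def] by measurable
  have km1[measurable]: "(\<lambda>u. k u s) \<in> borel_measurable borel" for s
    unfolding k_def[abs_def] by measurable
  define K where "K u s = k u s * g' s" for u s
  have Km[measurable]: "(\<lambda>(u, s). K u s) \<in> borel_measurable (lborel \<Otimes>\<^sub>M lborel)"
    unfolding K_def[abs_def] by measurable
  have KI: "(\<integral>\<^sup>+u. ennreal (k u s) \<partial>lborel) = ennreal (if s < t then B else 0)" for s
  proof (cases "s < t")
    case True
    have "(\<integral>\<^sup>+u. ennreal (k u s) \<partial>lborel)
       = (\<integral>\<^sup>+u. ennreal (indicator {s..t} u * ((t - u) powr (\<alpha> - 1) * (u - s) powr (- \<alpha>))) \<partial>lborel)"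
      by (intro nn_integral_cong) (simp add: k_def indicator_def)
    also have "\<dots> = ennreal B" unfolding B_def by (rule beta_kernel[OF \<alpha> True])
    finally show ?thesis using True by simp
  next
    case False
    have "k u s = 0" for u using False by (auto simp: k_def)
    thus ?thesis using False by simp
  qed
  have KIr: "(\<integral>u. k u s \<partial>lborel) = (if s < t then B else 0)" for s
  proof -
    have "(\<integral>\<^sup>+u. ennreal (k u s) \<partial>lborel) = ennreal (if s < t then B else 0)" by (rule KI)
    hence "integrable lborel (\<lambda>u. k u s) \<and> (\<integral>u. k u s \<partial>lborel) = (if s < t then B else 0)"
      using B0 by (subst (asm) nn_integral_eq_integrable) (auto simp: k0)
    thus ?thesis by simp
  qed
  have Kint: "integrable (lborel \<Otimes>\<^sub>M lborel) (\<lambda>(u, s). K u s)"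
  proof (subst integrable_iff_bounded, intro conjI)
    show "(\<lambda>(u, s). K u s) \<in> borel_measurable (lborel \<Otimes>\<^sub>M lborel)" by (rule Km)
    have "(\<integral>\<^sup>+p. ennreal (norm (case p of (u, s) \<Rightarrow> K u s)) \<partial>(lborel \<Otimes>\<^sub>M lborel))
        = (\<integral>\<^sup>+s. (\<integral>\<^sup>+u. ennreal (norm (K u s)) \<partial>lborel) \<partial>lborel)"
      by (subst lborel_pair.nn_integral_snd[symmetric]) (auto simp: case_prod_beta)
    also have "\<dots> = (\<integral>\<^sup>+s. ennreal \<bar>g' s\<bar> * ennreal (if s < t then B else 0) \<partial>lborel)"
    proof (intro nn_integral_cong)
      fix s
      have "(\<integral>\<^sup>+u. ennreal (norm (K u s)) \<partial>lborel) = (\<integral>\<^sup>+u. ennreal \<bar>g' s\<bar> * ennreal (k u s) \<partial>lborel)"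
        by (intro nn_integral_cong) (simp add: K_def abs_mult k0 ennreal_mult' mult.commute)
      also have "\<dots> = ennreal \<bar>g' s\<bar> * ennreal (if s < t then B else 0)"
        by (subst nn_integral_cmult) (auto simp: KI)
      finally show "(\<integral>\<^sup>+u. ennreal (norm (K u s)) \<partial>lborel) = ennreal \<bar>g' s\<bar> * ennreal (if s < t then B else 0)" .
    qed
    also have "\<dots> \<le> (\<integral>\<^sup>+s. ennreal B * ennreal (norm (g' s)) \<partial>lborel)"
      using B0 by (intro nn_integral_mono) (auto simp: mult.commute intro: mult_left_mono)
    also have "\<dots> = ennreal B * (\<integral>\<^sup>+s. ennreal (norm (g' s)) \<partial>lborel)"
      by (rule nn_integral_cmult) simp
    also have "\<dots> < \<infinity>"
      using g'i unfolding integrable_iff_bounded by (simp add: ennreal_mult_less_top)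
    finally show "(\<integral>\<^sup>+p. ennreal (norm (case p of (u, s) \<Rightarrow> K u s)) \<partial>(lborel \<Otimes>\<^sub>M lborel)) < \<infinity>" .
  qed
  define G where "G u = (LINT s:{0..u}|lborel. (u - s) powr (- \<alpha>) * g s)" for u
  have inner_s: "(\<integral>s. K u s \<partial>lborel) = indicator {0..t} u * ((t - u) powr (\<alpha> - 1) * G u)" for u
  proof (cases "u \<in> {0..t}")
    case True
    have "(\<integral>s. K u s \<partial>lborel) = (\<integral>s. (t - u) powr (\<alpha> - 1) * (indicator {0..u} s *\<^sub>R ((u - s) powr (- \<alpha>) * g s)) \<partial>lborel)"
      using True by (intro Bochner_Integration.integral_cong) (auto simp: K_def k_def g'_def indicator_def)
    also have "\<dots> = (t - u) powr (\<alpha> - 1) * G u"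
      unfolding G_def set_lebesgue_integral_def by (rule integral_mult_right_zero)
    finally show ?thesis using True by simp
  next
    case False
    have "K u s = 0" for s using False by (auto simp: K_def k_def g'_def)
    thus ?thesis using False by simp
  qed
  have inner_u: "(\<integral>u. K u s \<partial>lborel) = g' s * (if s < t then B else 0)" for s
  proof -
    have "(\<integral>u. K u s \<partial>lborel) = (\<integral>u. g' s * k u s \<partial>lborel)"
      by (simp add: K_def mult.commute)
    also have "\<dots> = g' s * (if s < t then B else 0)" by (simp add: KIr)
    finally show ?thesis .
  qed
  have "integrable lborel (\<lambda>u. \<integral>s. K u s \<partial>lborel)"
    by (rule lborel_pair.integrable_fst[OF Kint])
  thus "set_integrable lborel {0..t} (\<lambda>u. (t - u) powr (\<alpha> - 1) * G u)"
    unfolding set_integrable_def inner_s by simp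
  have "(LINT u:{0..t}|lborel. (t - u) powr (\<alpha> - 1) * G u) = (\<integral>u. \<integral>s. K u s \<partial>lborel \<partial>lborel)"
    unfolding set_lebesgue_integral_def inner_s by simp
  also have "\<dots> = (\<integral>s. \<integral>u. K u s \<partial>lborel \<partial>lborel)"
    by (rule lborel_pair.Fubini_integral[OF Kint, symmetric])
  also have "\<dots> = (\<integral>s. B * (indicator {0..t} s *\<^sub>R g s) \<partial>lborel)"
    unfolding inner_u
  proof (rule integral_cong_AE)
    show "(\<lambda>s. g' s * (if s < t then B else 0)) \<in> borel_measurable lborel" by measurable
    have "(\<lambda>s. B * (indicator {0..t} s *\<^sub>R g s)) = (\<lambda>s. B * g' s)" by (simp add: g'_def fun_eq_iff)
    moreover have "(\<lambda>s. B * g' s) \<in> borel_measurable lborel" by measurable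
    ultimately show "(\<lambda>s. B * (indicator {0..t} s *\<^sub>R g s)) \<in> borel_measurable lborel" by simp
    show "AE s in lborel. g' s * (if s < t then B else 0) = B * (indicator {0..t} s *\<^sub>R g s)"
      by (rule eventually_mono[OF AE_lborel_singleton[of t]]) (auto simp: g'_def indicator_def)
  qed
  also have "\<dots> = B * (LINT s:{0..t}|lborel. g s)"
    unfolding set_lebesgue_integral_def by (rule integral_mult_right_zero)
  finally show "(LINT u:{0..t}|lborel. (t - u) powr (\<alpha> - 1) * G u) = Beta (1 - \<alpha>) \<alpha> * (LINT s:{0..t}|lborel. g s)"
    by (simp add: B_def)
qed

theorem theorem5p1:
  fixes \<alpha> x0 :: real and f :: "real \<Rightarrow> real"
  assumes "0 < \<alpha>" and "\<alpha> < 1"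
  shows "\<not> (\<exists>x. is_solution \<alpha> f x0 x \<and> periodic_on_nonneg x \<and> nonconstant_on_nonneg x)"
proof
  note \<alpha> = assms
  assume "\<exists>x. is_solution \<alpha> f x0 x \<and> periodic_on_nonneg x \<and> nonconstant_on_nonneg x"
  then obtain x where sol: "is_solution \<alpha> f x0 x" and per: "periodic_on_nonneg x"
    and nc: "nonconstant_on_nonneg x" by blast
  from sol have "\<exists>dx. has_loc_int_derivative x dx \<and>
           (\<forall>t\<ge>0. caputo_defined \<alpha> dx t \<and> caputo \<alpha> dx t = f (x t))"
    unfolding is_solution_def by (rule conjunct2)
  then obtain h where hd: "has_loc_int_derivative x h"
    and ce': "\<forall>t\<ge>0. caputo_defined \<alpha> h t \<and> caputo \<alpha> h t = f (x t)" by (elim exE conjE)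
  have ce: "caputo \<alpha> h t = f (x t)" if "t \<ge> 0" for t using ce' that by simp
  from per have "\<exists>T>0. \<forall>t\<ge>0. x (t + T) = x t" unfolding periodic_on_nonneg_def .
  then obtain T where T: "T > 0" and xper': "\<forall>t\<ge>0. x (t + T) = x t" by (elim exE conjE)
  have xper: "x (t + T) = x t" if "t \<ge> 0" for t using xper' that by simp
  have hd': "\<forall>t\<ge>0. set_integrable lborel {0..t} h \<and> x t = x 0 + (LINT s:{0..t}|lborel. h s)"
    using hd unfolding has_loc_int_derivative_def .
  have hi: "set_integrable lborel {0..t} h" if "t \<ge> 0" for t using hd' that by blast
  have hx: "x t = x 0 + (LINT s:{0..t}|lborel. h s)" if "t \<ge> 0" for t using hd' that by blast
  define G where "G u = (LINT s:{0..u}|lborel. (u - s) powr (- \<alpha>) * h s)" for u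
  have Gam: "Gamma (1 - \<alpha>) > 0" using \<alpha> by simp
  have Gf: "G t = Gamma (1 - \<alpha>) * f (x t)" if "t \<ge> 0" for t
    using ce[OF that] Gam unfolding caputo_def G_def by (simp add: field_simps)
  have Gper: "G (t + T) = G t" if "t \<ge> 0" for t
    using Gf[of t] Gf[of "t + T"] xper[OF that] that T by simp
  define B where "B = Beta (1 - \<alpha>) \<alpha>"
  have B0: "B > 0" using \<alpha> by (simp add: B_def Beta_def)
  have FK1: "set_integrable lborel {0..t} (\<lambda>u. (t - u) powr (\<alpha> - 1) * G u)" if "t \<ge> 0" for t
    using fubini_key(1)[OF \<alpha> that hi[OF that]] unfolding G_def .
  have FK2: "(LINT u:{0..t}|lborel. (t - u) powr (\<alpha> - 1) * G u) = B * (x t - x 0)" if "t \<ge> 0" for t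
    using fubini_key(2)[OF \<alpha> that hi[OF that]] hx[OF that] unfolding G_def B_def by simp
  have shift: "(LINT u:{0..T}|lborel. (t + T - u) powr (\<alpha> - 1) * G u) = 0" if t: "t \<ge> 0" for t
  proof -
    define H where "H u = (t + T - u) powr (\<alpha> - 1) * G u" for u
    have Hi: "set_integrable lborel {0..t + T} H" using FK1[of "t + T"] t T by (simp add: H_def[abs_def])
    have Hi1: "set_integrable lborel {0..T} H" by (rule set_integrable_subset[OF Hi]) (use t in auto)
    have Hi2: "set_integrable lborel {T..t + T} H" by (rule set_integrable_subset[OF Hi]) (use T in auto)
    have un: "{0..t + T} = {0..T} \<union> {T..t + T}" using t T by auto
    have "(LINT u:{0..t + T}|lborel. H u) = (LINT u:{0..T}|lborel. H u) + (LINT u:{T..t + T}|lborel. H u)"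
      unfolding un
      by (rule set_integral_Un_AE[OF _ _ _ Hi1 Hi2])
         (auto intro!: eventually_mono[OF AE_lborel_singleton[of T]])
    moreover have "(LINT u:{T..t + T}|lborel. H u) = (LINT w:{0..t}|lborel. (t - w) powr (\<alpha> - 1) * G w)"
    proof -
      have "(LINT u:{T..t + T}|lborel. H u) = \<bar>1\<bar> *\<^sub>R (\<integral>w. indicator {T..t + T} (T + 1 * w) *\<^sub>R H (T + 1 * w) \<partial>lborel)"
        unfolding set_lebesgue_integral_def by (rule lborel_integral_real_affine) simp
      also have "\<dots> = (\<integral>w. indicator {0..t} w *\<^sub>R ((t - w) powr (\<alpha> - 1) * G w) \<partial>lborel)"
      proof -
        have eq: "indicator {T..t + T} (T + 1 * w) *\<^sub>R H (T + 1 * w) = indicator {0..t} w *\<^sub>R ((t - w) powr (\<alpha> - 1) * G w)" for w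
        proof (cases "w \<in> {0..t}")
          case True
          hence "G (T + w) = G w" using Gper[of w] by (simp add: add.commute)
          thus ?thesis using True by (simp add: H_def indicator_def)
        qed (simp add: indicator_def)
        show ?thesis by (simp only: eq) simp
      qed
      finally show ?thesis unfolding set_lebesgue_integral_def .
    qed
    ultimately have "B * (x (t + T) - x 0) = (LINT u:{0..T}|lborel. H u) + B * (x t - x 0)"
      using FK2[of "t + T"] FK2[of t] t T by (simp add: H_def[abs_def])
    hence "(LINT u:{0..T}|lborel. H u) = 0" using xper[OF t] by simp
    thus ?thesis by (simp add: H_def)
  qed
  have Z: "(LINT u:{0..T}|lborel. (v - u) powr (\<alpha> - 1) * G u) = 0" if "v > T" for v
    using shift[of "v - T"] that by simp
  have GiT: "set_integrable lborel {0..T} G"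
  proof -
    have I1: "set_integrable lborel {0..T} (\<lambda>u. (T + 1 - u) powr (\<alpha> - 1) * G u)"
      by (rule set_integrable_subset[OF FK1[of "T + 1"]]) (use T in auto)
    have I2: "set_integrable lborel {0..T} (\<lambda>u. (T + 1 - u) powr (1 - \<alpha>) * ((T + 1 - u) powr (\<alpha> - 1) * G u))"
    proof (rule set_int_mult_bounded[OF I1])
      show "set_borel_measurable lborel {0..T} (\<lambda>u. (T + 1 - u) powr (1 - \<alpha>))"
        by (rule sbm_global) auto
      show "\<bar>(T + 1 - u) powr (1 - \<alpha>)\<bar> \<le> (T + 1) powr (1 - \<alpha>)" if "u \<in> {0..T}" for u
        using that \<alpha> by (auto intro!: powr_mono2)
    qed
    have eqG: "(T + 1 - u) powr (1 - \<alpha>) * ((T + 1 - u) powr (\<alpha> - 1) * G u) = G u" if "u \<in> {0..T}" for u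
    proof -
      have "(T + 1 - u) powr (1 - \<alpha>) * (T + 1 - u) powr (\<alpha> - 1) = (T + 1 - u) powr ((1 - \<alpha>) + (\<alpha> - 1))"
        by (rule powr_add[symmetric])
      also have "\<dots> = 1" using that by simp
      finally show ?thesis by (simp add: mult.assoc[symmetric])
    qed
    have "set_integrable lborel {0..T} (\<lambda>u. (T + 1 - u) powr (1 - \<alpha>) * ((T + 1 - u) powr (\<alpha> - 1) * G u))
        = set_integrable lborel {0..T} G"
      by (rule set_integrable_cong) (auto simp: eqG)
    with I2 show ?thesis by simp
  qed
  have mz: "(LINT u:{0..T}|lborel. u ^ k * G u) = 0" for k
    by (rule moments_zero[OF \<alpha> T GiT Z])
  have orth: "(LINT u:{0..T}|lborel. \<phi> u * G u) = 0" if "continuous_on {0..T} \<phi>" for \<phi>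
    by (rule cont_orth[OF GiT mz that])
  have x0T: "x t = x 0" if "0 \<le> t" "t \<le> T" for t
  proof -
    have "(LINT u:{0..t}|lborel. (t - u) powr (\<alpha> - 1) * G u) = 0"
      by (rule final_zero[OF \<alpha> that orth GiT FK1[OF that(1)]])
    thus ?thesis using FK2[OF that(1)] B0 by simp
  qed
  have xn: "x (t + real n * T) = x t" if "t \<ge> 0" for t n
  proof (induction n)
    case (Suc n)
    have "x (t + real (Suc n) * T) = x ((t + real n * T) + T)" by (simp add: algebra_simps)
    also have "\<dots> = x (t + real n * T)" by (rule xper) (use that T in simp)
    finally show ?case using Suc by simp
  qed simp
  have xall: "x t = x 0" if "t \<ge> 0" for t
  proof -
    define n where "n = nat \<lfloor>t / T\<rfloor>"
    define r where "r = t - real n * T"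
    have fl: "real n = of_int \<lfloor>t / T\<rfloor>" using that T by (simp add: n_def)
    have f1: "of_int \<lfloor>t / T\<rfloor> \<le> t / T" "t / T < of_int \<lfloor>t / T\<rfloor> + 1" by linarith+
    have "real n * T \<le> t" using f1(1) T fl by (simp add: le_divide_eq)
    moreover have "t < (of_int \<lfloor>t / T\<rfloor> + 1) * T" using f1(2) pos_divide_less_eq[OF T] by blast
    hence "t < (real n + 1) * T" using fl by simp
    ultimately have r: "0 \<le> r" "r \<le> T" by (auto simp: r_def algebra_simps)
    have "x t = x (r + real n * T)" by (simp add: r_def)
    also have "\<dots> = x r" by (rule xn[OF r(1)])
    also have "\<dots> = x 0" by (rule x0T[OF r])
    finally show ?thesis .
  qed
  from nc obtain s t where st: "s \<ge> 0" "t \<ge> 0" "x s \<noteq> x t" unfolding nonconstant_on_nonneg_def by blast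
  have "x s = x 0" by (rule xall[OF st(1)])
  moreover have "x t = x 0" by (rule xall[OF st(2)])
  ultimately show False using st(3) by simp
qed

end
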